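(* Let $\{\mathcal{F}_n\}_{n\ge0}$ be a filtration of sub-$\sigma$-fields of $\mathcal{F}$, let $X\in L^\infty$, and let $\{X_n\}_{n\ge0}$ satisfy $X_n\in\mathbb{E}[X\mid\mathcal{F}_n]$ for all $n$. If $X$ lies in the $\|\cdot\|_\infty$-closure of $\bigcup_{n\ge1}L^\infty(\mathcal{F}_n)$, then $\lim_{n\to\infty}\|X_n-X\|_\infty=0$; in particular $X_n\to X$ almost surely.
   Context: $\mathbb{K}$ is a local field with non-archimedean absolute value $|\cdot|$ satisfying $|x|=0 \iff x=0$, $|xy|=|x||y|$, $|x+y|\le|x|\vee|y|$. $(\Omega,\mathcal{F},\mathbb{P})$ is a probability space; all (in)equalities are a.s. $L^\infty$ is the space of $\mathbb{K}$-valued random variables $X$ with $\|X\|_\infty:=\operatorname{ess\,sup}|X|<\infty$ (identified a.s.); $L^\infty(\mathcal{G})$ its $\mathcal{G}$-measurable subspace. For a non-negative real random variable $S$, $\operatorname{ess\,sup}\{S\mid\mathcal{G}\}:=\sup_{p\ge1}\mathbb{E}[S^p\mid\mathcal{G}]^{1/p}$ (usual real conditional expectation), $\|X\|_\mathcal{G}:=\operatorname{ess\,sup}\{|X|\mid\mathcal{G}\}$, and the conditional expectation is the set $\mathbb{E}[X\mid\mathcal{G}]:=\{Y\in L^\infty(\mathcal{G}): \|X-Y\|_\mathcal{G}\le\|X-Z\|_\mathcal{G}\text{ for all }Z\in L^\infty(\mathcal{G})\}$. A filtration is a non-decreasing sequence of sub-$\sigma$-fields. *)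

theory Defs
  imports "HOL-Probability.Probability"
begin

definition nonarch_local_field :: "('k::{field,metric_space} \<Rightarrow> real) \<Rightarrow> bool" where
  "nonarch_local_field av \<longleftrightarrow>
     (\<forall>x. av x \<ge> 0) \<and> (\<forall>x. av x = 0 \<longleftrightarrow> x = 0) \<and>
     (\<forall>x y. av (x * y) = av x * av y) \<and>
     (\<forall>x y. av (x + y) \<le> max (av x) (av y)) \<and>
     (\<forall>x y. dist x y = av (x - y)) \<and>
     (\<exists>x. av x \<noteq> 0 \<and> av x \<noteq> 1) \<and>
     (\<forall>f::nat \<Rightarrow> 'k. Cauchy f \<longrightarrow> convergent f) \<and> locally compact (UNIV :: 'k set)"

definition Linf_norm :: "'a measure \<Rightarrow> ('k \<Rightarrow> real) \<Rightarrow> ('a \<Rightarrow> 'k) \<Rightarrow> ereal" where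
  "Linf_norm M av X = esssup M (\<lambda>\<omega>. ereal (av (X \<omega>)))"

definition Linf :: "'a measure \<Rightarrow> 'a measure \<Rightarrow> ('k::topological_space \<Rightarrow> real) \<Rightarrow> ('a \<Rightarrow> 'k) set" where
  "Linf M G av = {X. X \<in> borel_measurable G \<and> Linf_norm M av X < \<infinity>}"

definition cond_esssup :: "'a measure \<Rightarrow> 'a measure \<Rightarrow> ('a \<Rightarrow> real) \<Rightarrow> 'a \<Rightarrow> ereal" where
  "cond_esssup M G S = (\<lambda>\<omega>. SUP p\<in>{1::nat..}. ereal (real_cond_exp M G (\<lambda>x. S x ^ p) \<omega> powr (1 / real p)))"

definition cond_norm :: "'a measure \<Rightarrow> 'a measure \<Rightarrow> ('k \<Rightarrow> real) \<Rightarrow> ('a \<Rightarrow> 'k) \<Rightarrow> 'a \<Rightarrow> ereal" where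
  "cond_norm M G av X = cond_esssup M G (\<lambda>\<omega>. av (X \<omega>))"

definition na_cond_exp :: "'a measure \<Rightarrow> 'a measure \<Rightarrow> ('k::{field,topological_space} \<Rightarrow> real)
    \<Rightarrow> ('a \<Rightarrow> 'k) \<Rightarrow> ('a \<Rightarrow> 'k) set" where
  "na_cond_exp M G av X = {Y \<in> Linf M G av. \<forall>Z \<in> Linf M G av.
      AE \<omega> in M. cond_norm M G av (\<lambda>x. X x - Y x) \<omega> \<le> cond_norm M G av (\<lambda>x. X x - Z x) \<omega>}"

end

theory Submission
  imports Defs
begin


lemma nalf_basic:
  fixes av :: "'k::{field,metric_space} \<Rightarrow> real"
  assumes "nonarch_local_field av"
  shows "\<And>x y. av (x - y) = dist x y" "\<And>x y. av (x * y) = av x * av y" "av 1 = 1"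
    "\<And>x. av x = 0 \<longleftrightarrow> x = 0"
proof -
  show d: "\<And>x y. av (x - y) = dist x y" using assms unfolding nonarch_local_field_def by auto
  show m: "\<And>x y. av (x * y) = av x * av y" using assms unfolding nonarch_local_field_def by auto
  show z: "\<And>x. av x = 0 \<longleftrightarrow> x = 0" using assms unfolding nonarch_local_field_def by auto
  have "av 1 = av 1 * av 1" using m[of 1 1] by simp
  moreover have "av 1 \<noteq> 0" using z by simp
  ultimately show "av 1 = 1" by (metis mult_cancel_left1)
qed

lemma nalf_sep:
  fixes av :: "'k::{field,metric_space} \<Rightarrow> real"
  assumes A: "nonarch_local_field av"
  shows "\<exists>D::'k set. countable D \<and> (\<forall>y e. e > 0 \<longrightarrow> (\<exists>d\<in>D. dist y d < e))"
proof -
  note B = nalf_basic[OF A]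
  have avd: "av x = dist x 0" for x using B(1)[of x 0] by simp
  have nn: "av x \<ge> 0" for x using avd by simp
  have inv: "av (inverse x) = inverse (av x)" for x
  proof (cases "x = 0")
    case False
    then have "av x * av (inverse x) = 1" using B(2)[of x "inverse x"] B(3) by simp
    moreover have "av x \<noteq> 0" using B(4) False by simp
    ultimately show ?thesis by (simp add: field_simps)
  qed (use B(4)[of 0] in simp)
  have lc: "locally compact (UNIV :: 'k set)" using A unfolding nonarch_local_field_def by auto
  obtain U V where UV: "openin (top_of_set UNIV) U" "compact V" "(0::'k) \<in> U" "U \<subseteq> V"
    using locallyE[OF lc, of UNIV 0] by auto
  have "open U" using UV(1) by simp
  then obtain r where r: "r > 0" "ball 0 r \<subseteq> U" using UV(3) open_contains_ball by blast
  have tb: "\<forall>e>0. \<exists>k. finite k \<and> V \<subseteq> (\<Union>x\<in>k. ball x e)" using UV(2) compact_eq_totally_bounded by blast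
  have "\<forall>m::nat. \<exists>k. finite k \<and> V \<subseteq> (\<Union>x\<in>k. ball x (1 / (real m + 1)))"
    by (intro allI tb[rule_format]) simp
  then obtain K where K: "\<And>m. finite (K m) \<and> V \<subseteq> (\<Union>x\<in>K m. ball x (1 / (real m + 1)))"
    by metis
  define D0 where "D0 = (\<Union>m. K m)"
  have cD0: "countable D0" unfolding D0_def using K by (simp add: countable_finite)
  have dD0: "\<exists>d\<in>D0. dist y d < e" if yV: "y \<in> V" and "e > 0" for y e
  proof -
    obtain m where m: "1 / (real m + 1) < e" using \<open>e>0\<close>
      using nat_approx_posE[OF \<open>e>0\<close>] by (metis of_nat_Suc add.commute)
    obtain x where "x \<in> K m" "y \<in> ball x (1 / (real m + 1))" using K[of m] yV by blast
    then have "x \<in> D0" "dist y x < e" using m unfolding D0_def by (auto simp: dist_commute)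
    then show ?thesis by blast
  qed
  obtain x0 where x0: "av x0 \<noteq> 0" "av x0 \<noteq> 1" using A unfolding nonarch_local_field_def by auto
  obtain p where p: "0 < av p" "av p < 1"
  proof (cases "av x0 < 1")
    case True then show ?thesis using that[of x0] x0 nn[of x0] by simp
  next
    case False then show ?thesis using that[of "inverse x0"] x0 inv[of x0] nn[of x0]
      by (simp add: inverse_less_1_iff)
  qed
  have pn: "av (p ^ n) = av p ^ n" for n
    by (induction n) (simp_all add: B(3) B(2))
  define D where "D = (\<Union>n. (\<lambda>d. d / p ^ n) ` D0)"
  have "countable D" unfolding D_def using cD0 by simp
  moreover have "\<exists>d\<in>D. dist y d < e" if "e > 0" for y e
  proof -
    have "(\<lambda>n. av p ^ n * av y) \<longlonglongrightarrow> 0"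
      using p by (intro tendsto_mult_left_zero LIMSEQ_power_zero) simp
    then have "eventually (\<lambda>n. av p ^ n * av y < r) sequentially"
      using order_tendstoD(2)[OF _ r(1)] by blast
    then obtain n where n: "av p ^ n * av y < r" by (auto simp: eventually_sequentially)
    have "dist 0 (p ^ n * y) < r" using n pn B(2)[of "p^n" y] avd[of "p^n*y"]
      by (auto simp: dist_commute)
    then have "p ^ n * y \<in> V" using r(2) UV(4) by auto
    moreover have "e * av p ^ n > 0" using that p by simp
    ultimately obtain d where d: "d \<in> D0" "dist (p ^ n * y) d < e * av p ^ n" using dD0 by blast
    have "p \<noteq> 0" using p(1) B(4)[of p] by linarith
    then have pn0: "p ^ n \<noteq> 0" by simp
    have apn: "av p ^ n > 0" using p by simp
    have e1: "y - d / p ^ n = (p ^ n * y - d) * inverse (p ^ n)" using pn0 by (simp add: field_simps)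
    have "dist y (d / p ^ n) = av (y - d / p ^ n)" using B(1) by simp
    also have "\<dots> = av ((p ^ n * y - d) * inverse (p ^ n))" using e1 by simp
    also have "\<dots> = av (p ^ n * y - d) * inverse (av p ^ n)" using B(2) inv pn by simp
    also have "\<dots> = dist (p ^ n * y) d / av p ^ n" using B(1) by (simp add: divide_inverse)
    also have "\<dots> < e" using d(2) apn by (simp add: divide_less_eq)
    finally show ?thesis unfolding D_def using d(1) by blast
  qed
  ultimately show ?thesis by blast
qed

lemma dist_meas:
  fixes f g :: "'a \<Rightarrow> 'k::metric_space"
  assumes D: "countable (D::'k set)" "\<forall>y e. e>0 \<longrightarrow> (\<exists>d\<in>D. dist y d < e)"
    and f: "f \<in> borel_measurable M" and g: "g \<in> borel_measurable M"
  shows "(\<lambda>\<omega>. dist (f \<omega>) (g \<omega>)) \<in> borel_measurable M"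
proof -
  have Dne: "D \<noteq> {}" using D(2) by (metis empty_iff zero_less_one)
  have eq: "dist (f \<omega>) (g \<omega>) = (INF d\<in>D. dist (f \<omega>) d + dist d (g \<omega>))" for \<omega>
  proof (rule antisym)
    show "dist (f \<omega>) (g \<omega>) \<le> (INF d\<in>D. dist (f \<omega>) d + dist d (g \<omega>))"
      by (rule cINF_greatest[OF Dne]) (rule dist_triangle)
    have bdd: "bdd_below ((\<lambda>d. dist (f \<omega>) d + dist d (g \<omega>)) ` D)"
      by (rule bdd_belowI[of _ 0]) auto
    show "(INF d\<in>D. dist (f \<omega>) d + dist d (g \<omega>)) \<le> dist (f \<omega>) (g \<omega>)"
    proof (rule field_le_epsilon)
      fix e :: real assume "0 < e"
      then obtain d where d: "d \<in> D" "dist (f \<omega>) d < e / 2" using D(2) by (meson half_gt_zero)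
      have "(INF d\<in>D. dist (f \<omega>) d + dist d (g \<omega>)) \<le> dist (f \<omega>) d + dist d (g \<omega>)"
        by (rule cINF_lower[OF bdd d(1)])
      also have "\<dots> \<le> dist (f \<omega>) (g \<omega>) + e"
        using d(2) dist_triangle[of d "g \<omega>" "f \<omega>"] by (simp add: dist_commute)
      finally show "(INF d\<in>D. dist (f \<omega>) d + dist d (g \<omega>)) \<le> dist (f \<omega>) (g \<omega>) + e" .
    qed
  qed
  have m1: "(\<lambda>\<omega>. dist (h \<omega>) d) \<in> borel_measurable M" if "h \<in> borel_measurable M" for h :: "'a \<Rightarrow> 'k" and d
  proof -
    have "(\<lambda>x. dist x d) \<in> borel_measurable borel"
      by (intro borel_measurable_continuous_onI continuous_intros)
    from measurable_compose[OF that this] show ?thesis by simp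
  qed
  have "(\<lambda>\<omega>. INF d\<in>D. dist (f \<omega>) d + dist d (g \<omega>)) \<in> borel_measurable M"
    using m1[OF f] m1[OF g] by (intro borel_measurable_cINF_real[OF D(1)] borel_measurable_add) (auto simp: dist_commute)
  then show ?thesis by (subst eq) 
qed



lemma powr_root_le:
  fixes x c :: real and p :: nat
  assumes "0 \<le> x" "0 \<le> c" "p \<ge> 1" "x \<le> c ^ p"
  shows "x powr (1 / real p) \<le> c"
proof -
  have "x powr (1 / real p) \<le> (c ^ p) powr (1 / real p)"
    using assms by (intro powr_mono2) auto
  also have "\<dots> = c"
  proof (cases "c = 0")
    case False
    then have "c ^ p = c powr real p" using assms by (simp add: powr_realpow)
    then show ?thesis using assms by (simp add: powr_powr)
  qed (use assms in simp)
  finally show ?thesis .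
qed

lemma powr_root_ge:
  fixes x c :: real and p :: nat
  assumes "0 \<le> x" "0 \<le> c" "p \<ge> 1" "x powr (1 / real p) \<le> c"
  shows "x \<le> c ^ p"
proof -
  have "x = (x powr (1 / real p)) ^ p"
  proof (cases "x = 0")
    case False
    then have "(x powr (1 / real p)) ^ p = (x powr (1 / real p)) powr real p"
      using assms by (simp add: powr_realpow)
    then show ?thesis using assms by (simp add: powr_powr)
  qed (use assms in simp)
  also have "\<dots> \<le> c ^ p" using assms by (intro power_mono) auto
  finally show ?thesis .
qed

lemma keyA:
  fixes S T :: "'a \<Rightarrow> real"
  assumes P: "prob_space M" and G: "subalgebra M G"
    and Sm: "S \<in> borel_measurable M" and Tm: "T \<in> borel_measurable M"
    and S0: "\<And>\<omega>. S \<omega> \<ge> 0" and T0: "\<And>\<omega>. T \<omega> \<ge> 0"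
    and Sb: "AE \<omega> in M. S \<omega> \<le> a" and Tb: "AE \<omega> in M. T \<omega> \<le> c" and c0: "c \<ge> 0"
    and le: "AE \<omega> in M. cond_esssup M G S \<omega> \<le> cond_esssup M G T \<omega>"
  shows "AE \<omega> in M. S \<omega> \<le> c"
proof -
  interpret prob_space M by (rule P)
  interpret finite_measure_subalgebra M G by unfold_locales (rule G)
  have intpow: "integrable M (\<lambda>x. U x ^ p)" if "U \<in> borel_measurable M" "\<And>\<omega>. U \<omega> \<ge> 0"
    "AE \<omega> in M. U \<omega> \<le> b" for U :: "'a \<Rightarrow> real" and b p
  proof (rule Bochner_Integration.integrable_bound[where f="\<lambda>x. b ^ p"])
    show "integrable M (\<lambda>x. b ^ p)" by simp
    show "(\<lambda>x. U x ^ p) \<in> borel_measurable M" using that by measurable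
    show "AE x in M. norm (U x ^ p) \<le> norm (b ^ p)"
    proof (rule AE_mp[OF that(3)], intro AE_I2 impI)
      fix x assume "U x \<le> b"
      moreover have "0 \<le> U x" by (rule that(2))
      ultimately have "U x ^ p \<le> b ^ p" "0 \<le> U x ^ p" by (auto intro: power_mono)
      then show "norm (U x ^ p) \<le> norm (b ^ p)" by simp
    qed
  qed
  have "AE \<omega> in M. real_cond_exp M G (\<lambda>x. T x ^ p) \<omega> \<le> c ^ p \<and> real_cond_exp M G (\<lambda>x. T x ^ p) \<omega> \<ge> 0" for p
  proof -
    have "AE \<omega> in M. real_cond_exp M G (\<lambda>x. T x ^ p) \<omega> \<le> c ^ p"
      by (rule real_cond_exp_le_c[OF intpow[OF Tm T0 Tb]]) (use Tb T0 in \<open>auto intro: power_mono\<close>)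
    moreover have "AE \<omega> in M. real_cond_exp M G (\<lambda>x. T x ^ p) \<omega> \<ge> 0"
      by (rule real_cond_exp_ge_c[OF intpow[OF Tm T0 Tb]]) (use T0 in auto)
    ultimately show ?thesis by eventually_elim auto
  qed
  then have "AE \<omega> in M. \<forall>p. real_cond_exp M G (\<lambda>x. T x ^ p) \<omega> \<le> c ^ p \<and> real_cond_exp M G (\<lambda>x. T x ^ p) \<omega> \<ge> 0"
    by (simp add: AE_all_countable)
  then have Tc: "AE \<omega> in M. cond_esssup M G T \<omega> \<le> ereal c"
  proof eventually_elim
    case (elim \<omega>)
    show ?case unfolding cond_esssup_def
      by (rule SUP_least) (use elim c0 in \<open>auto intro!: powr_root_le\<close>)
  qed
  have "AE \<omega> in M. cond_esssup M G S \<omega> \<le> ereal c" using le Tc by eventually_elim auto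
  have Sp: "AE \<omega> in M. real_cond_exp M G (\<lambda>x. S x ^ p) \<omega> \<le> c ^ p" if "p \<ge> 1" for p
  proof -
    have "AE \<omega> in M. real_cond_exp M G (\<lambda>x. S x ^ p) \<omega> \<ge> 0"
      by (rule real_cond_exp_ge_c[OF intpow[OF Sm S0 Sb]]) (use S0 in auto)
    with \<open>AE \<omega> in M. cond_esssup M G S \<omega> \<le> ereal c\<close> show ?thesis
    proof eventually_elim
      case (elim \<omega>)
      have "ereal (real_cond_exp M G (\<lambda>x. S x ^ p) \<omega> powr (1 / real p)) \<le> cond_esssup M G S \<omega>"
        unfolding cond_esssup_def by (rule SUP_upper) (use that in auto)
      then have "ereal (real_cond_exp M G (\<lambda>x. S x ^ p) \<omega> powr (1 / real p)) \<le> ereal c"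
        using elim(1) by (rule order_trans)
      then have "real_cond_exp M G (\<lambda>x. S x ^ p) \<omega> powr (1 / real p) \<le> c" by simp
      then show ?case using elim c0 that by (intro powr_root_ge) auto
    qed
  qed
  have intS: "(\<integral>x. S x ^ p \<partial>M) \<le> c ^ p" if "p \<ge> 1" for p
  proof -
    have "(\<integral>x. S x ^ p \<partial>M) = (\<integral>x. real_cond_exp M G (\<lambda>x. S x ^ p) x \<partial>M)"
      using real_cond_exp_int(2)[OF intpow[OF Sm S0 Sb]] by simp
    also have "\<dots> \<le> (\<integral>x. c ^ p \<partial>M)"
      by (rule integral_mono_AE[OF real_cond_exp_int(1)[OF intpow[OF Sm S0 Sb]] _ Sp[OF that]]) simp
    also have "\<dots> = c ^ p" by (simp add: prob_space)
    finally show ?thesis .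
  qed
  have eps: "AE \<omega> in M. S \<omega> \<le> c + 1 / (real k + 1)" for k :: nat
  proof (rule ccontr)
    define e where "e = 1 / (real k + 1)"
    have e0: "e > 0" unfolding e_def by simp
    define A where "A = {\<omega> \<in> space M. S \<omega> > c + e}"
    have Am: "A \<in> sets M" unfolding A_def using Sm by measurable
    assume "\<not> (AE \<omega> in M. S \<omega> \<le> c + 1 / (real k + 1))"
    moreover have "{x\<in>space M. \<not> S x \<le> c + 1 / (real k + 1)} = A"
      unfolding A_def e_def by (auto simp: not_le)
    ultimately have "emeasure M A \<noteq> 0"
      using AE_iff_measurable[OF Am, of "\<lambda>\<omega>. S \<omega> \<le> c + 1 / (real k + 1)"] by auto
    then have d0: "measure M A > 0" using Am by (simp add: emeasure_eq_measure zero_less_measure_iff)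
    have "(c + e) ^ p * measure M A \<le> c ^ p" if "p \<ge> 1" for p
    proof -
      have "(c + e) ^ p * measure M A = (\<integral>x. (c + e) ^ p * indicator A x \<partial>M)"
        using Am by simp
      also have "\<dots> \<le> (\<integral>x. S x ^ p \<partial>M)"
      proof (rule integral_mono)
        have "integrable M (indicat_real A)" using Am by (simp add: emeasure_eq_measure)
        then show "integrable M (\<lambda>x. (c + e) ^ p * indicator A x)" by simp
        show "integrable M (\<lambda>x. S x ^ p)" by (rule intpow[OF Sm S0 Sb])
        fix x assume "x \<in> space M"
        show "(c + e) ^ p * indicator A x \<le> S x ^ p"
          using S0[of x] c0 e0 unfolding A_def indicator_def by (auto intro!: power_mono)
      qed
      also have "\<dots> \<le> c ^ p" by (rule intS[OF that])
      finally show ?thesis .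
    qed
    then have le2: "measure M A \<le> (c / (c + e)) ^ p" if "p \<ge> 1" for p
      using that c0 e0 by (auto simp: power_divide field_simps)
    have "(\<lambda>p. (c / (c + e)) ^ p) \<longlonglongrightarrow> 0"
      using c0 e0 by (intro LIMSEQ_power_zero) auto
    then have "measure M A \<le> 0"
      using le2 by (intro LIMSEQ_le_const[where X="\<lambda>p. (c / (c + e)) ^ p"]) auto
    then show False using d0 by simp
  qed
  then have "AE \<omega> in M. \<forall>k::nat. S \<omega> \<le> c + 1 / (real k + 1)" by (simp add: AE_all_countable)
  then show ?thesis
  proof eventually_elim
    case (elim \<omega>)
    show ?case
    proof (rule field_le_epsilon)
      fix e :: real assume "e > 0"
      then obtain k where "1 / (real k + 1) < e" using nat_approx_posE by (metis of_nat_Suc add.commute)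
      then show "S \<omega> \<le> c + e" using elim[rule_format, of k] by linarith
    qed
  qed
qed



lemma ereal_le_real_of: "ereal x \<le> E \<Longrightarrow> E < \<infinity> \<Longrightarrow> x \<le> real_of_ereal E"
  by (cases E) auto

lemma Linf_norm_AE:
  assumes "Linf_norm M av Y < \<infinity>"
  shows "\<exists>a. AE \<omega> in M. av (Y \<omega>) \<le> a"
proof -
  have "AE \<omega> in M. ereal (av (Y \<omega>)) \<le> Linf_norm M av Y"
    unfolding Linf_norm_def by (rule esssup_AE)
  then have "AE \<omega> in M. av (Y \<omega>) \<le> real_of_ereal (Linf_norm M av Y)"
    by eventually_elim (use assms in \<open>auto intro: ereal_le_real_of\<close>)
  then show ?thesis by blast
qed

lemma Linf_norm_nonneg:
  assumes "prob_space M" "\<And>x. av x \<ge> 0"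
  shows "Linf_norm M av Y \<ge> 0"
proof -
  have "esssup M (\<lambda>x. 0::ereal) \<le> Linf_norm M av Y"
    unfolding Linf_norm_def by (rule esssup_mono) (use assms(2) in auto)
  moreover have "esssup M (\<lambda>x. 0::ereal) = 0"
    by (rule esssup_const) (use prob_space.emeasure_space_1[OF assms(1)] in simp)
  ultimately show ?thesis by simp
qed

lemma main_ineq:
  fixes M :: "'a measure" and G :: "'a measure"
    and av :: "'k::{field,metric_space} \<Rightarrow> real"
    and X Y Z :: "'a \<Rightarrow> 'k"
  assumes A: "nonarch_local_field av" and P: "prob_space M" and G: "subalgebra M G"
    and X: "X \<in> Linf M M av" and Y: "Y \<in> na_cond_exp M G av X" and Z: "Z \<in> Linf M G av"
  shows "Linf_norm M av (\<lambda>\<omega>. Y \<omega> - X \<omega>) \<le> Linf_norm M av (\<lambda>\<omega>. X \<omega> - Z \<omega>)"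
proof (cases "Linf_norm M av (\<lambda>\<omega>. X \<omega> - Z \<omega>) < \<infinity>")
  case False then show ?thesis by simp
next
  case True
  define E where "E = Linf_norm M av (\<lambda>\<omega>. X \<omega> - Z \<omega>)"
  note B = nalf_basic[OF A]
  have avn: "av x \<ge> 0" for x using B(1)[of x 0] by simp
  obtain D :: "'k set" where D: "countable D" "\<forall>y e. e > 0 \<longrightarrow> (\<exists>d\<in>D. dist y d < e)"
    using nalf_sep[OF A] by blast
  have Xm: "X \<in> borel_measurable M" using X unfolding Linf_def by simp
  have YL: "Y \<in> Linf M G av" using Y unfolding na_cond_exp_def by simp
  have Ym: "Y \<in> borel_measurable M"
    using YL measurable_from_subalg[OF G] unfolding Linf_def by blast
  have Zm: "Z \<in> borel_measurable M"
    using Z measurable_from_subalg[OF G] unfolding Linf_def by blast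
  define S where "S = (\<lambda>\<omega>. dist (X \<omega>) (Y \<omega>))"
  define T where "T = (\<lambda>\<omega>. dist (X \<omega>) (Z \<omega>))"
  have Sm: "S \<in> borel_measurable M" unfolding S_def by (rule dist_meas[OF D Xm Ym])
  have Tm: "T \<in> borel_measurable M" unfolding T_def by (rule dist_meas[OF D Xm Zm])
  have Seq: "(\<lambda>\<omega>. av (X \<omega> - Y \<omega>)) = S" unfolding S_def using B(1) by simp
  have Seq2: "(\<lambda>\<omega>. av (Y \<omega> - X \<omega>)) = S" unfolding S_def using B(1) by (simp add: dist_commute)
  have Teq: "(\<lambda>\<omega>. av (X \<omega> - Z \<omega>)) = T" unfolding T_def using B(1) by simp
  obtain a1 where a1: "AE \<omega> in M. av (X \<omega>) \<le> a1"
    using Linf_norm_AE X unfolding Linf_def by blast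
  obtain a2 where a2: "AE \<omega> in M. av (Y \<omega>) \<le> a2"
    using Linf_norm_AE YL unfolding Linf_def by blast
  have Sb: "AE \<omega> in M. S \<omega> \<le> a1 + a2"
    using a1 a2
  proof eventually_elim
    case (elim \<omega>)
    have "S \<omega> \<le> dist (X \<omega>) 0 + dist 0 (Y \<omega>)" unfolding S_def by (rule dist_triangle)
    also have "\<dots> = av (X \<omega>) + av (Y \<omega>)" using B(1)[of "X \<omega>" 0] B(1)[of "Y \<omega>" 0]
      by (simp add: dist_commute)
    finally show ?case using elim by linarith
  qed
  define c where "c = max 0 (real_of_ereal E)"
  have "AE \<omega> in M. ereal (T \<omega>) \<le> E"
    unfolding E_def Linf_norm_def T_def B(1) by (rule esssup_AE)
  then have Tb: "AE \<omega> in M. T \<omega> \<le> c"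
    by eventually_elim (use True in \<open>auto simp: c_def E_def dest!: ereal_le_real_of\<close>)
  have "AE \<omega> in M. cond_esssup M G (\<lambda>\<omega>. av (X \<omega> - Y \<omega>)) \<omega> \<le> cond_esssup M G (\<lambda>\<omega>. av (X \<omega> - Z \<omega>)) \<omega>"
    using Y Z unfolding na_cond_exp_def cond_norm_def by auto
  then have le: "AE \<omega> in M. cond_esssup M G S \<omega> \<le> cond_esssup M G T \<omega>"
    by (simp only: Seq Teq)
  have "AE \<omega> in M. S \<omega> \<le> c"
    by (rule keyA[OF P G Sm Tm _ _ Sb Tb _ le]) (auto simp: S_def T_def c_def)
  then have ae2: "AE \<omega> in M. ereal (dist (Y \<omega>) (X \<omega>)) \<le> ereal c"
    by eventually_elim (simp add: S_def dist_commute)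
  have "S = (\<lambda>\<omega>. dist (Y \<omega>) (X \<omega>))" unfolding S_def by (simp add: dist_commute)
  then have "(\<lambda>\<omega>. dist (Y \<omega>) (X \<omega>)) \<in> borel_measurable M" using Sm by simp
  then have m2: "(\<lambda>\<omega>. ereal (dist (Y \<omega>) (X \<omega>))) \<in> borel_measurable M"
    by (rule borel_measurable_ereal)
  have "Linf_norm M av (\<lambda>\<omega>. Y \<omega> - X \<omega>) \<le> ereal c"
    unfolding Linf_norm_def B(1) by (rule esssup_I[OF m2 ae2])
  also have "ereal c \<le> E"
  proof -
    have "E \<ge> 0" unfolding E_def by (rule Linf_norm_nonneg[OF P avn])
    then show ?thesis using True unfolding c_def E_def by (cases "Linf_norm M av (\<lambda>\<omega>. X \<omega> - Z \<omega>)") auto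
  qed
  finally show ?thesis unfolding E_def .
qed

lemma sets_mono_F:
  assumes "\<And>n. sets (F n) \<subseteq> sets (F (Suc n))" "N \<le> n"
  shows "sets (F N) \<subseteq> sets (F n)"
  using assms(2)
proof (induction n rule: dec_induct)
  case (step m) then show ?case using assms(1)[of m] by blast
qed simp

lemma measurable_sub:
  assumes "space A = space A'" "sets A \<subseteq> sets A'" "f \<in> measurable A B"
  shows "f \<in> measurable A' B"
  using assms unfolding measurable_def by auto

theorem mainTheorem19:
  fixes M :: "'a measure" and F :: "nat \<Rightarrow> 'a measure"
    and av :: "'k::{field,metric_space} \<Rightarrow> real"
    and X :: "'a \<Rightarrow> 'k" and Xs :: "nat \<Rightarrow> 'a \<Rightarrow> 'k"
  assumes "nonarch_local_field av"
    and "prob_space M"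
    and "\<And>n. subalgebra M (F n)"
    and "\<And>n. sets (F n) \<subseteq> sets (F (Suc n))"
    and "X \<in> Linf M M av"
    and "\<And>n. Xs n \<in> na_cond_exp M (F n) av X"
    and "\<forall>e>0. \<exists>n\<ge>1. \<exists>Y \<in> Linf M (F n) av. Linf_norm M av (\<lambda>\<omega>. X \<omega> - Y \<omega>) < ereal e"
  shows "(\<lambda>n. Linf_norm M av (\<lambda>\<omega>. Xs n \<omega> - X \<omega>)) \<longlonglongrightarrow> 0
         \<and> (AE \<omega> in M. (\<lambda>n. Xs n \<omega>) \<longlonglongrightarrow> X \<omega>)"
proof -
  note A = assms(1) and P = assms(2) and G = assms(3) and mono = assms(4) and XL = assms(5)
    and Xs = assms(6) and appr = assms(7)
  note B = nalf_basic[OF A]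
  have avn: "av x \<ge> 0" for x using B(1)[of x 0] by simp
  define f where "f n = Linf_norm M av (\<lambda>\<omega>. Xs n \<omega> - X \<omega>)" for n
  have f0: "f n \<ge> 0" for n unfolding f_def by (rule Linf_norm_nonneg[OF P avn])
  have small: "\<exists>N. \<forall>n\<ge>N. f n < ereal e" if e0: "e > 0" for e
  proof -
    obtain N Y where NY: "Y \<in> Linf M (F N) av" "Linf_norm M av (\<lambda>\<omega>. X \<omega> - Y \<omega>) < ereal e"
      using appr e0 by blast
    have "f n < ereal e" if "n \<ge> N" for n
    proof -
      have "space (F N) = space (F n)" using G[of N] G[of n] unfolding subalgebra_def by simp
      moreover have "sets (F N) \<subseteq> sets (F n)" by (rule sets_mono_F[where F=F, OF mono that])
      ultimately have "Y \<in> Linf M (F n) av" using NY(1) measurable_sub unfolding Linf_def by blast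
      then have "f n \<le> Linf_norm M av (\<lambda>\<omega>. X \<omega> - Y \<omega>)"
        unfolding f_def by (rule main_ineq[OF A P G XL Xs])
      then show ?thesis using NY(2) by simp
    qed
    then show ?thesis by blast
  qed
  have lim: "f \<longlonglongrightarrow> 0"
  proof (rule order_tendstoI)
    fix a :: ereal assume "a < 0"
    then have "a < f n" for n using f0[of n] by (rule less_le_trans)
    then show "eventually (\<lambda>n. a < f n) sequentially" by simp
  next
    fix a :: ereal assume a: "0 < a"
    show "eventually (\<lambda>n. f n < a) sequentially"
    proof (cases a)
      case (real r)
      then obtain N where "\<forall>n\<ge>N. f n < ereal r" using small a by auto
      then show ?thesis unfolding real eventually_sequentially by blast
    next
      case PInf
      obtain N where N: "\<forall>n\<ge>N. f n < ereal 1" using small[of 1] by auto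
      have "f n < \<infinity>" if "n \<ge> N" for n
        using N[rule_format, OF that] by (rule less_le_trans) simp
      then show ?thesis unfolding PInf eventually_sequentially by blast
    qed (use a in simp)
  qed
  have "AE \<omega> in M. ereal (dist (Xs n \<omega>) (X \<omega>)) \<le> f n" for n
    unfolding f_def Linf_norm_def B(1) by (rule esssup_AE)
  then have "AE \<omega> in M. \<forall>n. ereal (dist (Xs n \<omega>) (X \<omega>)) \<le> f n" by (simp add: AE_all_countable)
  then have "AE \<omega> in M. (\<lambda>n. Xs n \<omega>) \<longlonglongrightarrow> X \<omega>"
  proof eventually_elim
    case (elim \<omega>)
    have "(\<lambda>n. ereal (dist (Xs n \<omega>) (X \<omega>))) \<longlonglongrightarrow> (0::ereal)"
      by (rule tendsto_sandwich[of "\<lambda>n. 0" _ _ f]) (use elim lim in auto)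
    then have "(\<lambda>n. ereal (dist (Xs n \<omega>) (X \<omega>))) \<longlonglongrightarrow> ereal 0"
      by (simp only: zero_ereal_def)
    then have "(\<lambda>n. dist (Xs n \<omega>) (X \<omega>)) \<longlonglongrightarrow> 0" by (simp only: lim_ereal)
    then show ?case by (rule iffD2[OF tendsto_dist_iff])
  qed
  with lim show ?thesis unfolding f_def by simp
qed

end
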